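(* Let $d\ge1$. Every $(d+1)$-lateration graph can be obtained from a complete graph by a finite (possibly empty) sequence of edge-reduced graph attachments.
   Context: A graph $G=(V,E)$ with $V=\{1,\dots,v\}$ is a $(d+1)$-lateration graph if the vertices $1,\dots,d+1$ form a complete graph, and each vertex $i>d+1$ is joined to exactly $d+1$ vertices of $\{1,\dots,i-1\}$ (these being all the edges). Given graphs $G_A=(V_A,E_A)$, $G_B=(V_B,E_B)$ with $V_C=V_A\cap V_B$ nonempty and a proper subset of both $V_A$ and $V_B$, their graph attachment is $(V_A\cup V_B,E_A\cup E_B)$, and their edge-reduced graph attachment is obtained from it by removing the edges $\{i,j\}$ with $i,j\in V_C$ that belong to one of the two graphs ($G_B$, say) but not to the other ($G_A$). *)

theory Defs
  imports Main
begin

text \<open>A (simple, undirected) graph is a pair (V, E) of a vertex set and a set of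
edges, each edge being a 2-element subset of V.\<close>

type_synonym 'a graph = "'a set \<times> 'a set set"

definition complete_edges :: "'a set \<Rightarrow> 'a set set" where
  "complete_edges V = {e. e \<subseteq> V \<and> card e = 2}"

definition complete_graph :: "'a set \<Rightarrow> 'a graph" where
  "complete_graph V = (V, complete_edges V)"

definition lateration_graph :: "nat \<Rightarrow> nat graph \<Rightarrow> bool" where
  "lateration_graph d G \<longleftrightarrow>
     (\<exists>v. fst G = {1..v} \<and> d + 1 \<le> v \<and>
        snd G \<subseteq> complete_edges (fst G) \<and>
        (\<forall>i j. 1 \<le> i \<and> i < j \<and> j \<le> d + 1 \<longrightarrow> {i, j} \<in> snd G) \<and>
        (\<forall>i. d + 1 < i \<and> i \<le> v \<longrightarrow> card {j \<in> {1..<i}. {j, i} \<in> snd G} = d + 1))"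

definition attachable :: "'a graph \<Rightarrow> 'a graph \<Rightarrow> bool" where
  "attachable GA GB \<longleftrightarrow>
     fst GA \<inter> fst GB \<noteq> {} \<and> fst GA \<inter> fst GB \<subset> fst GA \<and> fst GA \<inter> fst GB \<subset> fst GB"

definition edge_reduced_attach :: "'a graph \<Rightarrow> 'a graph \<Rightarrow> 'a graph" where
  "edge_reduced_attach GA GB =
     (fst GA \<union> fst GB,
      (snd GA \<union> snd GB) - {e. e \<subseteq> fst GA \<inter> fst GB \<and> e \<in> snd GB \<and> e \<notin> snd GA})"

inductive obtainable_by_era :: "'a graph \<Rightarrow> bool" where
  base: "finite V \<Longrightarrow> V \<noteq> {} \<Longrightarrow> obtainable_by_era (complete_graph V)"
| step: "obtainable_by_era GA \<Longrightarrow> finite VB \<Longrightarrow> attachable GA (complete_graph VB) \<Longrightarrow>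
         obtainable_by_era (edge_reduced_attach GA (complete_graph VB))"

end

theory Submission
  imports Defs
begin

definition lat :: "nat \<Rightarrow> nat \<Rightarrow> nat graph \<Rightarrow> bool" where
  "lat d v G \<longleftrightarrow> fst G = {1..v} \<and> d + 1 \<le> v \<and>
        snd G \<subseteq> complete_edges (fst G) \<and>
        (\<forall>i j. 1 \<le> i \<and> i < j \<and> j \<le> d + 1 \<longrightarrow> {i, j} \<in> snd G) \<and>
        (\<forall>i. d + 1 < i \<and> i \<le> v \<longrightarrow> card {j \<in> {1..<i}. {j, i} \<in> snd G} = d + 1)"

lemma card2_nat: "card (e::nat set) = 2 \<Longrightarrow> \<exists>a b. a < b \<and> e = {a, b}"
proof -
  assume "card e = 2"
  then obtain x y where xy: "e = {x, y}" "x \<noteq> y" by (auto simp: card_2_iff)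
  show ?thesis
  proof (cases "x < y")
    case True thus ?thesis using xy by blast
  next
    case False hence "y < x" using xy by simp
    thus ?thesis using xy by (metis insert_commute)
  qed
qed

lemma complete_case:
  fixes G :: "nat graph"
  assumes "fst G = {1..v}" "snd G \<subseteq> complete_edges (fst G)"
    "\<And>i j. 1 \<le> i \<Longrightarrow> i < j \<Longrightarrow> j \<le> v \<Longrightarrow> {i, j} \<in> snd G" "v \<ge> 1"
  shows "obtainable_by_era G"
proof -
  have "snd G = complete_edges {1..v}"
  proof
    show "snd G \<subseteq> complete_edges {1..v}" using assms by simp
    show "complete_edges {1..v} \<subseteq> snd G"
    proof
      fix e assume "e \<in> complete_edges {1..v}"
      hence e: "e \<subseteq> {1..v}" "card e = 2" by (auto simp: complete_edges_def)
      then obtain a b where "a < b" "e = {a,b}" using card2_nat[OF e(2)] by blast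
      thus "e \<in> snd G" using assms(3) e by auto
    qed
  qed
  hence "G = complete_graph {1..v}" using assms(1)
    by (metis complete_graph_def prod.collapse)
  thus ?thesis using assms(4) by (auto intro: obtainable_by_era.base)
qed

lemma main: "lat d v G \<Longrightarrow> obtainable_by_era G"
proof (induction v arbitrary: G)
  case 0 thus ?case by (simp add: lat_def)
next
  case (Suc w)
  have L1: "fst G = {1..Suc w}" and L2: "d + 1 \<le> Suc w"
    and L3: "snd G \<subseteq> complete_edges (fst G)"
    and L4: "\<And>i j. 1 \<le> i \<Longrightarrow> i < j \<Longrightarrow> j \<le> d + 1 \<Longrightarrow> {i, j} \<in> snd G"
    and L5: "\<And>i. d + 1 < i \<Longrightarrow> i \<le> Suc w \<Longrightarrow> card {j \<in> {1..<i}. {j, i} \<in> snd G} = d + 1"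
    using Suc.prems unfolding lat_def by blast+
  show ?case
  proof (cases "Suc w = d + 1")
    case True
    show ?thesis
    proof (rule complete_case[where v="Suc w"])
      show "fst G = {1..Suc w}" "snd G \<subseteq> complete_edges (fst G)" "1 \<le> Suc w"
        using L1 L3 by auto
      fix i j assume "1 \<le> i" "i < j" "j \<le> Suc w"
      thus "{i, j} \<in> snd G" using L4 True by simp
    qed
  next
    case False
    hence big: "d + 1 < Suc w" using L2 by simp
    define N where "N = {j \<in> {1..<Suc w}. {j, Suc w} \<in> snd G}"
    have cN: "card N = d + 1" using L5[OF big] unfolding N_def by simp
    define G' where "G' = ({1..w}, {e \<in> snd G. Suc w \<notin> e})"
    have "lat d w G'"
      unfolding lat_def
    proof (intro conjI allI impI)
      show "fst G' = {1..w}" by (simp add: G'_def)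
      show "d + 1 \<le> w" using big by simp
      show "snd G' \<subseteq> complete_edges (fst G')"
      proof
        fix e assume "e \<in> snd G'"
        hence e: "e \<in> snd G" "Suc w \<notin> e" by (auto simp: G'_def)
        hence "e \<subseteq> {1..Suc w}" "card e = 2" using L1 L3 by (auto simp: complete_edges_def)
        hence "e \<subseteq> {1..w}" "card e = 2" using e(2) by (auto simp: subset_iff le_Suc_eq)
        thus "e \<in> complete_edges (fst G')" by (simp add: G'_def complete_edges_def)
      qed
      fix i j assume ij: "1 \<le> i \<and> i < j \<and> j \<le> d + 1"
      hence "{i, j} \<in> snd G" using L4 by blast
      moreover have "Suc w \<notin> {i, j}" using ij big by auto
      ultimately show "{i, j} \<in> snd G'" by (simp add: G'_def)
    next
      fix i assume a: "d + 1 < i \<and> i \<le> w"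
      have "{j \<in> {1..<i}. {j, i} \<in> snd G'} = {j \<in> {1..<i}. {j, i} \<in> snd G}"
        using a by (auto simp: G'_def)
      thus "card {j \<in> {1..<i}. {j, i} \<in> snd G'} = d + 1" using L5[of i] a by simp
    qed
    hence IH: "obtainable_by_era G'" by (rule Suc.IH)
    show ?thesis
    proof (cases "N = {1..<Suc w}")
      case True
      show ?thesis
      proof (rule complete_case[where v="Suc w"])
        show "fst G = {1..Suc w}" "snd G \<subseteq> complete_edges (fst G)" "1 \<le> Suc w" using L1 L3 by auto
        fix i j assume ij: "1 \<le> i" "i < j" "j \<le> Suc w"
        have "w = d + 1" using True cN by simp
        show "{i, j} \<in> snd G"
        proof (cases "j = Suc w")
          case True
          hence "i \<in> N" using \<open>N = {1..<Suc w}\<close> ij by auto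
          thus ?thesis using True unfolding N_def by auto
        next
          case False
          thus ?thesis using L4 ij \<open>w = d + 1\<close> by simp
        qed
      qed
    next
      case False
      define VB where "VB = insert (Suc w) N"
      have Nsub: "N \<subseteq> {1..w}" unfolding N_def by auto
      have NA: "fst G' \<inter> fst (complete_graph VB) = N"
        using Nsub by (auto simp: G'_def VB_def complete_graph_def)
      have Nne: "N \<noteq> {}" using cN by auto
      have att: "attachable G' (complete_graph VB)"
        unfolding attachable_def NA
      proof (intro conjI)
        show "N \<noteq> {}" by (rule Nne)
        have "{1..<Suc w} = {1..w}" by auto
        hence "N \<noteq> {1..w}" using False by simp
        thus "N \<subset> fst G'" using Nsub by (auto simp: G'_def)
        have "Suc w \<notin> N" using Nsub by auto
        thus "N \<subset> fst (complete_graph VB)" by (auto simp: VB_def complete_graph_def)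
      qed
      have fin: "finite VB" unfolding VB_def N_def by auto
      have "edge_reduced_attach G' (complete_graph VB) = G"
      proof -
        have V: "{1..w} \<union> VB = {1..Suc w}" using Nsub by (auto simp: VB_def)
        have E: "(snd G' \<union> complete_edges VB) -
            {e. e \<subseteq> N \<and> e \<in> complete_edges VB \<and> e \<notin> snd G'} = snd G"
        proof (intro equalityI subsetI)
          fix e assume e: "e \<in> (snd G' \<union> complete_edges VB) -
            {e. e \<subseteq> N \<and> e \<in> complete_edges VB \<and> e \<notin> snd G'}"
          show "e \<in> snd G"
          proof (cases "e \<in> snd G'")
            case True thus ?thesis by (simp add: G'_def)
          next
            case False
            hence "e \<in> complete_edges VB" "\<not> e \<subseteq> N" using e by auto
            hence "e \<subseteq> VB" "card e = 2" "Suc w \<in> e" by (auto simp: complete_edges_def VB_def)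
            then obtain a b where ab: "a < b" "e = {a,b}" using card2_nat[of e] by blast
            have "b = Suc w" using ab \<open>e \<subseteq> VB\<close> \<open>Suc w \<in> e\<close> Nsub by (auto simp: VB_def)
            hence "a \<in> N" using ab \<open>e \<subseteq> VB\<close> by (auto simp: VB_def)
            thus ?thesis using ab \<open>b = Suc w\<close> by (auto simp: N_def)
          qed
        next
          fix e assume e: "e \<in> snd G"
          hence ec: "e \<subseteq> {1..Suc w}" "card e = 2" using L1 L3 by (auto simp: complete_edges_def)
          then obtain a b where ab: "a < b" "e = {a,b}" using card2_nat[OF ec(2)] by blast
          show "e \<in> (snd G' \<union> complete_edges VB) -
            {e. e \<subseteq> N \<and> e \<in> complete_edges VB \<and> e \<notin> snd G'}"
          proof (cases "Suc w \<in> e")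
            case False thus ?thesis using e by (auto simp: G'_def)
          next
            case True
            hence "b = Suc w" using ab ec by auto
            hence "a \<in> N" using ab ec e by (auto simp: N_def)
            hence "e \<in> complete_edges VB" using ab \<open>b = Suc w\<close> ec
              by (auto simp: complete_edges_def VB_def)
            moreover have "\<not> e \<subseteq> N" using True Nsub by auto
            ultimately show ?thesis by auto
          qed
        qed
        show ?thesis using V E NA L1
          unfolding edge_reduced_attach_def
          by (simp add: complete_graph_def G'_def prod_eq_iff)
      qed
      moreover have "obtainable_by_era (edge_reduced_attach G' (complete_graph VB))"
        using IH fin att by (rule obtainable_by_era.step)
      ultimately show ?thesis by simp
    qed
  qed
qed

theorem proposition3:
  fixes d :: nat and G :: "nat graph"
  assumes "d \<ge> 1" and "lateration_graph d G"
  shows "obtainable_by_era G"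
  using assms(2) unfolding lateration_graph_def by (auto simp: lat_def intro: main)

end
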